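(* If $\pi$ is an irreducible permutation on a finite alphabet $\mathcal{A}$ with $\pi=\pi^{-1}$, then $\pi$ has at least $g(\pi)$ transpositions, i.e. the map $\pi_{\mathcal{A}}=\pi_0^{-1}\circ\pi_1$ has at least $g(\pi)$ orbits of size two.
   Context: $\pi=(\pi_0,\pi_1)$ with bijections $\pi_\varepsilon:\mathcal{A}\to\{1,\dots,d\}$, irreducible (no $k<d$ with $\pi_0^{-1}(\{1..k\})=\pi_1^{-1}(\{1..k\})$); $\pi^{-1}=(\pi_1,\pi_0)$. The genus $g(\pi)$ is $\tfrac12\mathrm{rank}(\Omega_\pi)$, where $(\Omega_\pi)_{\alpha,\beta}=1$ if $\pi_0(\alpha)<\pi_0(\beta)$ and $\pi_1(\alpha)>\pi_1(\beta)$, $-1$ if $\pi_0(\alpha)>\pi_0(\beta)$ and $\pi_1(\alpha)<\pi_1(\beta)$, $0$ otherwise (equivalently, the genus of any translation surface suspended over $\pi$). *)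

theory Defs
  imports "HOL-Analysis.Analysis"
begin

definition is_perm :: "('a::finite \<Rightarrow> nat) \<Rightarrow> ('a \<Rightarrow> nat) \<Rightarrow> bool" where
  "is_perm p0 p1 \<longleftrightarrow> bij_betw p0 UNIV {1..CARD('a)} \<and> bij_betw p1 UNIV {1..CARD('a)}"

definition irreducible_perm :: "('a::finite \<Rightarrow> nat) \<Rightarrow> ('a \<Rightarrow> nat) \<Rightarrow> bool" where
  "irreducible_perm p0 p1 \<longleftrightarrow>
     \<not> (\<exists>k. 1 \<le> k \<and> k < CARD('a) \<and> p0 -` {1..k} = p1 -` {1..k})"

text \<open>Equality of permutations up to renaming of the alphabet (reduced permutations):
(q0,q1) equals (p0,p1) if q = p \<circ> tau for a bijection tau of the alphabet.\<close>
definition perm_equiv :: "('a \<Rightarrow> nat) \<Rightarrow> ('a \<Rightarrow> nat) \<Rightarrow> ('a \<Rightarrow> nat) \<Rightarrow> ('a \<Rightarrow> nat) \<Rightarrow> bool" where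
  "perm_equiv p0 p1 q0 q1 \<longleftrightarrow> (\<exists>tau. bij tau \<and> q0 = p0 \<circ> tau \<and> q1 = p1 \<circ> tau)"

text \<open>pi = pi^{-1}, where pi^{-1} = (p1, p0).\<close>
definition self_inverse_perm :: "('a \<Rightarrow> nat) \<Rightarrow> ('a \<Rightarrow> nat) \<Rightarrow> bool" where
  "self_inverse_perm p0 p1 \<longleftrightarrow> perm_equiv p0 p1 p1 p0"

definition Omega :: "('a::finite \<Rightarrow> nat) \<Rightarrow> ('a \<Rightarrow> nat) \<Rightarrow> real^'a^'a" where
  "Omega p0 p1 = (\<chi> \<alpha> \<beta>.
     if p0 \<alpha> < p0 \<beta> \<and> p1 \<alpha> > p1 \<beta> then 1
     else if p0 \<alpha> > p0 \<beta> \<and> p1 \<alpha> < p1 \<beta> then -1 else 0)"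

definition genus :: "('a::finite \<Rightarrow> nat) \<Rightarrow> ('a \<Rightarrow> nat) \<Rightarrow> real" where
  "genus p0 p1 = real (rank (Omega p0 p1)) / 2"

definition monodromy :: "('a::finite \<Rightarrow> nat) \<Rightarrow> ('a \<Rightarrow> nat) \<Rightarrow> 'a \<Rightarrow> 'a" where
  "monodromy p0 p1 = inv p0 \<circ> p1"

definition orbits_size_two :: "('a \<Rightarrow> 'a) \<Rightarrow> 'a set set" where
  "orbits_size_two f = {{a, f a} | a. f a \<noteq> a \<and> f (f a) = a}"

end

theory Submission
  imports Defs
begin

lemma msub_ldistrib: "(A::real^'n^'m) ** (B - C) = A ** B - A ** (C::real^'p^'n)"
  by (simp add: matrix_matrix_mult_def vec_eq_iff sum_subtractf algebra_simps)

lemma msub_rdistrib: "((A::real^'n^'m) - B) ** (C::real^'p^'n) = A ** C - B ** C"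
  by (simp add: matrix_matrix_mult_def vec_eq_iff sum_subtractf algebra_simps)

lemma rank_add_le: "rank ((A::real^'n^'m) + B) \<le> rank A + rank B"
proof -
  let ?S = "range (\<lambda>x. A *v x)" and ?T = "range (\<lambda>x. B *v x)"
  have sS: "subspace ?S" and sT: "subspace ?T"
    by (auto intro!: linear_subspace_image subspace_UNIV simp: matrix_vector_mul_linear)
  have "range (\<lambda>x. (A + B) *v x) \<subseteq> {x + y |x y. x \<in> ?S \<and> y \<in> ?T}"
    by (auto simp: matrix_vector_mult_add_rdistrib)
  then have "dim (range (\<lambda>x. (A + B) *v x)) \<le> dim {x + y |x y. x \<in> ?S \<and> y \<in> ?T}"
    by (rule dim_subset)
  also have "\<dots> \<le> dim ?S + dim ?T" using dim_sums_Int[OF sS sT] by linarith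
  finally show ?thesis by (simp add: rank_dim_range)
qed

lemma rank_IQ:
  fixes s :: "'a::finite \<Rightarrow> 'a"
  assumes inv: "\<And>x. s (s x) = x"
  shows "rank (mat 1 - (\<chi> i j. if j = s i then 1 else 0) :: real^'a^'a) \<le> card (orbits_size_two s)"
proof -
  let ?M = "(mat 1 - (\<chi> i j. if j = s i then 1 else 0) :: real^'a^'a)"
  define c where "c X = (SOME a. a \<in> X)" for X :: "'a set"
  define f where "f X = axis (c X) (1::real) - axis (s (c X)) 1" for X :: "'a set"
  have row: "row i ?M = axis i 1 - axis (s i) 1" for i
    by (simp add: row_def vec_eq_iff axis_def mat_def)
  have "row i ?M \<in> span (f ` orbits_size_two s)" for i
  proof (cases "s i = i")
    case True
    then show ?thesis by (simp add: row span_zero)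
  next
    case False
    then have O: "{i, s i} \<in> orbits_size_two s"
      unfolding orbits_size_two_def using inv by blast
    have "c {i, s i} \<in> {i, s i}" unfolding c_def by (rule someI) auto
    then have "c {i, s i} = i \<or> c {i, s i} = s i" by auto
    then show ?thesis
    proof
      assume "c {i, s i} = i"
      then have "row i ?M = f {i, s i}" by (simp add: row f_def)
      then show ?thesis using O by (simp add: span_base)
    next
      assume "c {i, s i} = s i"
      then have "row i ?M = - f {i, s i}" by (simp add: row f_def inv)
      then show ?thesis using O by (simp add: span_base span_neg)
    qed
  qed
  then have "rows ?M \<subseteq> span (f ` orbits_size_two s)"
    by (auto simp: rows_def)
  then have "dim (rows ?M) \<le> card (f ` orbits_size_two s)"
    by (rule dim_le_card) simp
  also have "\<dots> \<le> card (orbits_size_two s)"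
    by (rule card_image_le) simp
  finally show ?thesis by (simp add: row_rank_def)
qed

theorem mainTheorem9:
  fixes p0 p1 :: "'a::finite \<Rightarrow> nat"
  assumes "is_perm p0 p1"
    and "irreducible_perm p0 p1"
    and "self_inverse_perm p0 p1"
  shows "real (card (orbits_size_two (monodromy p0 p1))) \<ge> genus p0 p1"
proof -
  have inj0: "inj p0" and inj1: "inj p1"
    using assms(1) unfolding is_perm_def bij_betw_def by auto
  obtain tau where tau: "bij tau" "p1 = p0 \<circ> tau" "p0 = p1 \<circ> tau"
    using assms(3) unfolding self_inverse_perm_def perm_equiv_def by auto
  have invt: "tau (tau x) = x" for x
  proof -
    have "p0 x = p0 (tau (tau x))" using tau by (metis comp_apply)
    then show ?thesis using inj0 by (simp add: inj_eq)
  qed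
  have mono: "monodromy p0 p1 = tau"
    using tau(2) inj0 by (auto simp: monodromy_def fun_eq_iff)
  define Q :: "real^'a^'a" where "Q = (\<chi> i j. if j = tau i then 1 else 0)"
  define L :: "real^'a^'a" where "L = (\<chi> i j. if p0 i < p0 j then 1 else 0)"
  have QL: "(Q ** L) $ i $ j = L $ tau i $ j" for i j
  proof -
    have "(Q ** L) $ i $ j = (\<Sum>k\<in>UNIV. (if k = tau i then 1 else 0) * L $ k $ j)"
      unfolding matrix_matrix_mult_def Q_def by (simp add: eq_commute)
    also have "\<dots> = (\<Sum>k\<in>UNIV. if k = tau i then L $ k $ j else 0)"
      by (rule sum.cong) auto
    also have "\<dots> = L $ tau i $ j" by simp
    finally show ?thesis .
  qed
  have QLQ: "(Q ** L ** Q) $ i $ j = L $ tau i $ tau j" for i j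
  proof -
    have "(Q ** L ** Q) $ i $ j = (\<Sum>k\<in>UNIV. L $ tau i $ k * (if j = tau k then 1 else 0))"
      unfolding matrix_matrix_mult_def[of "Q ** L" Q] vec_lambda_beta QL by (simp add: Q_def)
    also have "\<dots> = (\<Sum>k\<in>UNIV. if k = tau j then L $ tau i $ k else 0)"
      by (rule sum.cong) (auto simp: invt)
    also have "\<dots> = L $ tau i $ tau j" by simp
    finally show ?thesis .
  qed
  have Om: "Omega p0 p1 = L - Q ** L ** Q"
  proof -
    have "Omega p0 p1 $ i $ j = L $ i $ j - L $ tau i $ tau j" for i j
    proof (cases "i = j")
      case True then show ?thesis by (simp add: Omega_def L_def)
    next
      case False
      then have "p0 i \<noteq> p0 j" "p1 i \<noteq> p1 j" using inj0 inj1 by (auto simp: inj_eq)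
      then show ?thesis using tau(2) by (auto simp: Omega_def L_def)
    qed
    then show ?thesis by (simp add: vec_eq_iff QLQ)
  qed
  have eq: "L - Q ** L ** Q = (mat 1 - Q) ** L + Q ** L ** (mat 1 - Q)"
    by (simp add: msub_ldistrib msub_rdistrib)
  have "rank (Omega p0 p1) \<le> rank ((mat 1 - Q) ** L) + rank (Q ** L ** (mat 1 - Q))"
    unfolding Om eq by (rule rank_add_le)
  also have "\<dots> \<le> rank (mat 1 - Q) + rank (mat 1 - Q)"
    using rank_mul_le_left rank_mul_le_right add_mono by blast
  also have "\<dots> \<le> 2 * card (orbits_size_two tau)"
    using rank_IQ[of tau, OF invt] unfolding Q_def by simp
  finally show ?thesis unfolding genus_def mono by simp
qed

end
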